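(* Let $\mathbb L$ be a combinatorially indecomposable tropical Lagrangian multi-section of rank $r$ over a complete fan $\Sigma$ in $N_{\mathbb R}\cong\mathbb R^n$. For any $\tau\in\Sigma(n-1)$ and any cone $\omega'$ of $L$, the endomorphism $N_\tau(\omega')$ is nilpotent, and for any distinct cones $\omega'\ne\omega''$ of $L$ lying over the same cone $\omega\in\Sigma$, $N_\tau(\omega')N_\tau(\omega'')=0$. In particular, $[N_\tau(\omega'),N_\tau(\omega'')]=0$ for any cones $\omega',\omega''$ of $L$ lying over the same $\omega$.
   Context: $N$ lattice of rank $n$, $M=\mathrm{Hom}(N,\mathbb Z)$, $\Sigma(k)$ the $k$-dimensional cones of $\Sigma$, $\tau^\vee$ the dual cone, $U(\tau)=\mathrm{Spec}\,\mathbb C[\tau^\vee\cap M]$, $z^m$ monomials. $\mathbb L=(L,\Sigma_L,\mu,\pi,\varphi)$: $(L,\Sigma_L)$ a cone complex (finite union of closed cones each identified with a rational polyhedral cone, faces being cones, $L$ the disjoint union of relative interiors), $\mu$ a positive integer weight constant on relative interiors, $\pi$ a branched covering onto $(N_{\mathbb R},\Sigma)$ mapping cones homeomorphically onto cones with weighted fibre count $r$, $\varphi$ continuous and integral linear on each cone. $m(\sigma')\in M$ is the slope of $\varphi$ on a maximal cone $\sigma'$; for $\sigma\in\Sigma(n)$, $\sigma^{(1)},\dots,\sigma^{(r)}$ are its lifts listed with multiplicity. Combinatorially indecomposable: not combinatorially equivalent to a combinatorial union of two connected tropical Lagrangian multi-sections; such $\mathbb L$ is $(n-1)$-separable, i.e.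 distinct lifts of any $\tau\in\Sigma(n-1)$ carry distinct restrictions of $\varphi$, and its ramification locus lies in the union of cones of dimension $\le n-2$. $N_\tau(\omega')$: let $\tau=\sigma_1\cap\sigma_2$ with $\sigma_1,\sigma_2\in\Sigma(n)$. $N_\tau(\omega')$ is the endomorphism of the trivial rank $r$ bundle on $U(\tau)$ with frame $\{1(\sigma_1^{(\alpha)})\}$ whose $(\alpha,\beta)$-entry is $n^{(\alpha\beta)}_\tau(\omega')z^{m(\sigma_1^{(\alpha)})-m(\sigma_1^{(\beta)})}$, for arbitrary fixed constants $n^{(\alpha\beta)}_\tau(\omega')\in\mathbb C$, if $\omega'\subset\sigma_1^{(\alpha)}\cap\sigma_1^{(\beta)}$, $\alpha\ne\beta$ and $m(\sigma_1^{(\alpha)})-m(\sigma_1^{(\beta)})\in\tau^\vee\cap M$, and $0$ otherwise. *)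

theory Defs
  imports "HOL-Analysis.Analysis" "HOL-Library.Poly_Mapping" "Jordan_Normal_Form.Matrix"
begin

text \<open>N = Z^n is modelled as int^'n (n = CARD('n)), N_R = real^'n; M = Hom(N,Z) is identified
  with int^'n via the standard dot product.\<close>

definition ofv :: "int^'n \<Rightarrow> real^'n" where
  "ofv m = (\<chi> i. real_of_int (m $ i))"

definition rat_poly_cone :: "(real^'n) set \<Rightarrow> bool" where
  "rat_poly_cone C \<longleftrightarrow> (\<exists>S. finite S \<and> S \<subseteq> range ofv \<and>
      C = {x. \<exists>a. (\<forall>v\<in>S. 0 \<le> a v) \<and> x = (\<Sum>v\<in>S. a v *\<^sub>R v)})"

definition fan :: "(real^'n) set set \<Rightarrow> bool" where
  "fan Sig \<longleftrightarrow> finite Sig \<and>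
     (\<forall>C\<in>Sig. rat_poly_cone C \<and> C \<inter> uminus ` C = {0}) \<and>
     (\<forall>C\<in>Sig. \<forall>F. F face_of C \<and> F \<noteq> {} \<longrightarrow> F \<in> Sig) \<and>
     (\<forall>C\<in>Sig. \<forall>D\<in>Sig. (C \<inter> D) face_of C \<and> (C \<inter> D) face_of D)"

definition complete_fan :: "(real^'n) set set \<Rightarrow> bool" where
  "complete_fan Sig \<longleftrightarrow> fan Sig \<and> \<Union>Sig = UNIV"

definition cones_of_dim :: "(real^'n) set set \<Rightarrow> nat \<Rightarrow> (real^'n) set set" where
  "cones_of_dim Sig k = {C\<in>Sig. aff_dim C = int k}"

definition dual_lattice_pts :: "(real^'n) set \<Rightarrow> (int^'n) set" where
  "dual_lattice_pts tau = {m. \<forall>v\<in>tau. 0 \<le> ofv m \<bullet> v}"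

text \<open>The cone complex L is given combinatorially: a finite set Lc of (closed) cones,
  the face relation facL (facL c' c: c' is a face of c), the weight mu, the map pr (= the covering map pi) sending
  each cone of L homeomorphically (and linearly) onto a cone of Sigma, and phi c, the function
  phi on the cone c, transported to pr c via pr.\<close>
definition trop_lag_multisection ::
  "(real^'n) set set \<Rightarrow> 'c set \<Rightarrow> ('c \<Rightarrow> 'c \<Rightarrow> bool) \<Rightarrow> ('c \<Rightarrow> nat) \<Rightarrow>
   ('c \<Rightarrow> (real^'n) set) \<Rightarrow> ('c \<Rightarrow> real^'n \<Rightarrow> real) \<Rightarrow> nat \<Rightarrow> bool" where
  "trop_lag_multisection Sig Lc facL mu pr phi r \<longleftrightarrow>
     finite Lc \<and>
     (\<forall>c\<in>Lc. facL c c) \<and>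
     (\<forall>c\<in>Lc. \<forall>d\<in>Lc. facL c d \<and> facL d c \<longrightarrow> c = d) \<and>
     (\<forall>c\<in>Lc. \<forall>d\<in>Lc. \<forall>e\<in>Lc. facL c d \<and> facL d e \<longrightarrow> facL c e) \<and>
     (\<forall>c\<in>Lc. pr c \<in> Sig) \<and>
     (\<forall>c\<in>Lc. bij_betw pr {d\<in>Lc. facL d c} {F\<in>Sig. F face_of pr c}) \<and>
     (\<forall>c\<in>Lc. 0 < mu c) \<and>
     (\<forall>w\<in>Sig. (\<Sum>c\<in>{c\<in>Lc. pr c = w}. mu c) = r) \<and>
     (\<forall>c\<in>Lc. \<exists>m. \<forall>x\<in>pr c. phi c x = ofv m \<bullet> x) \<and>
     (\<forall>c\<in>Lc. \<forall>d\<in>Lc. facL d c \<longrightarrow> (\<forall>x\<in>pr d. phi d x = phi c x))"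

text \<open>pr is unramified along (the relative interior of) the cone c: weight one and pr maps
  the star of c bijectively onto the star of pr c (local homeomorphism).\<close>
definition unramified_at ::
  "(real^'n) set set \<Rightarrow> 'c set \<Rightarrow> ('c \<Rightarrow> 'c \<Rightarrow> bool) \<Rightarrow> ('c \<Rightarrow> nat) \<Rightarrow>
   ('c \<Rightarrow> (real^'n) set) \<Rightarrow> 'c \<Rightarrow> bool" where
  "unramified_at Sig Lc facL mu pr c \<longleftrightarrow> mu c = 1 \<and>
     (\<forall>w\<in>Sig. pr c face_of w \<longrightarrow> (\<exists>!d. d \<in> Lc \<and> facL c d \<and> pr d = w))"

definition ramification_in_codim2 ::
  "(real^'n) set set \<Rightarrow> 'c set \<Rightarrow> ('c \<Rightarrow> 'c \<Rightarrow> bool) \<Rightarrow> ('c \<Rightarrow> nat) \<Rightarrow>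
   ('c \<Rightarrow> (real^'n) set) \<Rightarrow> bool" where
  "ramification_in_codim2 Sig Lc facL mu pr \<longleftrightarrow>
     (\<forall>c\<in>Lc. int CARD('n) - 1 \<le> aff_dim (pr c) \<longrightarrow> unramified_at Sig Lc facL mu pr c)"

definition codim1_separable ::
  "(real^'n) set set \<Rightarrow> 'c set \<Rightarrow> ('c \<Rightarrow> (real^'n) set) \<Rightarrow> ('c \<Rightarrow> real^'n \<Rightarrow> real) \<Rightarrow> bool" where
  "codim1_separable Sig Lc pr phi \<longleftrightarrow>
     (\<forall>tau\<in>cones_of_dim Sig (CARD('n) - 1). \<forall>c\<in>Lc. \<forall>d\<in>Lc.
        pr c = tau \<and> pr d = tau \<and> c \<noteq> d \<longrightarrow> (\<exists>x\<in>tau. phi c x \<noteq> phi d x))"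

definition slope :: "('c \<Rightarrow> (real^'n) set) \<Rightarrow> ('c \<Rightarrow> real^'n \<Rightarrow> real) \<Rightarrow> 'c \<Rightarrow> int^'n" where
  "slope pr phi c = (SOME m. \<forall>x\<in>pr c. phi c x = ofv m \<bullet> x)"

text \<open>lift 0, ..., lift (r-1): the lifts sg^(1),...,sg^(r) of sg, listed with
  multiplicity mu.\<close>
definition lifts_listing ::
  "'c set \<Rightarrow> ('c \<Rightarrow> nat) \<Rightarrow> ('c \<Rightarrow> (real^'n) set) \<Rightarrow> nat \<Rightarrow> (real^'n) set \<Rightarrow> (nat \<Rightarrow> 'c) \<Rightarrow> bool" where
  "lifts_listing Lc mu pr r sg lift \<longleftrightarrow>
     (\<forall>a<r. lift a \<in> Lc \<and> pr (lift a) = sg) \<and>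
     (\<forall>c\<in>Lc. pr c = sg \<longrightarrow> card {a. a < r \<and> lift a = c} = mu c)"

text \<open>Monomial z^m in the group ring C[M] (Laurent polynomials); C[tau^vee \<inter> M] is the
  subring spanned by monomials with exponents in dual_lattice_pts tau.\<close>
definition monom_z :: "int^'n \<Rightarrow> complex \<Rightarrow> ((int^'n) \<Rightarrow>\<^sub>0 complex)" where
  "monom_z m a = Poly_Mapping.single m a"

text \<open>The endomorphism N_tau(omega') of the trivial rank r bundle on U(tau), as an r x r
  matrix in the frame 1(sigma_1^(alpha)); ncoef a b = n_tau^(ab)(omega').\<close>
definition N_endo ::
  "('c \<Rightarrow> 'c \<Rightarrow> bool) \<Rightarrow> ('c \<Rightarrow> (real^'n) set) \<Rightarrow> ('c \<Rightarrow> real^'n \<Rightarrow> real) \<Rightarrow> nat \<Rightarrow>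
   (real^'n) set \<Rightarrow> (nat \<Rightarrow> 'c) \<Rightarrow> (nat \<Rightarrow> nat \<Rightarrow> complex) \<Rightarrow> 'c \<Rightarrow>
   ((int^'n) \<Rightarrow>\<^sub>0 complex) mat" where
  "N_endo facL pr phi r tau lift ncoef w =
     mat r r (\<lambda>(a, b).
       if facL w (lift a) \<and> facL w (lift b) \<and> a \<noteq> b \<and>
          slope pr phi (lift a) - slope pr phi (lift b) \<in> dual_lattice_pts tau
       then monom_z (slope pr phi (lift a) - slope pr phi (lift b)) (ncoef a b)
       else 0)"

definition nilpotent_mat :: "'a::semiring_1 mat \<Rightarrow> bool" where
  "nilpotent_mat A \<longleftrightarrow> (\<exists>k. A ^\<^sub>m k = 0\<^sub>m (dim_row A) (dim_col A))"

end

theory Submission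
  imports Defs
begin



lemma mult_entry_nz:
  fixes A B :: "'a::semiring_0 mat"
  assumes "A \<in> carrier_mat r r" "B \<in> carrier_mat r r" "i < r" "j < r" "(A * B) $$ (i,j) \<noteq> 0"
  shows "\<exists>l<r. A $$ (i,l) \<noteq> 0 \<and> B $$ (l,j) \<noteq> 0"
proof -
  have "(\<Sum>l\<in>{0..<r}. A $$ (i,l) * B $$ (l,j)) \<noteq> 0"
    using assms by (simp add: scalar_prod_def row_def col_def)
  then obtain l where "l \<in> {0..<r}" "A $$ (i,l) * B $$ (l,j) \<noteq> 0"
    by (meson sum.neutral)
  then show ?thesis by (intro exI[of _ l]) auto
qed

lemma nilp_rank:
  fixes A :: "'a::semiring_1 mat" and h :: "nat \<Rightarrow> nat"
  assumes A: "A \<in> carrier_mat r r"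
    and dec: "\<And>i j. i < r \<Longrightarrow> j < r \<Longrightarrow> A $$ (i,j) \<noteq> 0 \<Longrightarrow> h j < h i"
    and bnd: "\<And>i. i < r \<Longrightarrow> h i < r"
  shows "nilpotent_mat A"
proof -
  have key: "\<forall>i<r. \<forall>j<r. (A ^\<^sub>m k) $$ (i,j) \<noteq> 0 \<longrightarrow> h j + k \<le> h i" for k
  proof (induction k)
    case 0
    then show ?case using A by auto
  next
    case (Suc k)
    show ?case
    proof (intro allI impI)
      fix i j assume ij: "i < r" "j < r" "(A ^\<^sub>m Suc k) $$ (i,j) \<noteq> 0"
      then have "(A ^\<^sub>m k * A) $$ (i,j) \<noteq> 0" by simp
      then obtain l where l: "l < r" "(A ^\<^sub>m k) $$ (i,l) \<noteq> 0" "A $$ (l,j) \<noteq> 0"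
        using mult_entry_nz[of "A ^\<^sub>m k" r A i j] A ij by auto
      have "h j < h l" using dec l ij by auto
      moreover have "h l + k \<le> h i" using Suc.IH l ij by auto
      ultimately show "h j + Suc k \<le> h i" by simp
    qed
  qed
  have "A ^\<^sub>m r = 0\<^sub>m r r"
  proof (rule eq_matI)
    fix i j assume "i < dim_row (0\<^sub>m r r :: 'a mat)" "j < dim_col (0\<^sub>m r r :: 'a mat)"
    then have ij: "i < r" "j < r" by auto
    show "(A ^\<^sub>m r) $$ (i,j) = 0\<^sub>m r r $$ (i,j)"
      using key[of r] ij bnd[of i] by force
  qed (use A in auto)
  then show ?thesis unfolding nilpotent_mat_def using A by auto
qed


lemma ofv_diff: "ofv (a - b) = ofv a - ofv (b::int^'n)"
  unfolding ofv_def by (rule iffD2[OF Finite_Cartesian_Product.vec_eq_iff], intro allI, simp only: vec_lambda_beta vector_minus_component of_int_diff)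
lemma ofv_add: "ofv (a + b) = ofv a + ofv (b::int^'n)"
  unfolding ofv_def by (rule iffD2[OF Finite_Cartesian_Product.vec_eq_iff], intro allI, simp only: vec_lambda_beta vector_add_component of_int_add)

lemma card1_eq: fixes lift :: "nat \<Rightarrow> 'c" assumes "card {a'. a' < r \<and> lift a' = lift a} = 1" "a < r" "b < r" "lift a = lift b"
  shows "a = b"
proof -
    obtain z where z: "{a'. a' < r \<and> lift a' = lift a} = {z}" using assms(1) by (rule card_1_singletonE)
    have "a \<in> {a'. a' < r \<and> lift a' = lift a}" using assms(2) by simp
    then have "a = z" using z by simp
    have "b \<in> {a'. a' < r \<and> lift a' = lift a}" using assms(3,4) by simp
    then have "b = z" using z by simp
    show ?thesis using \<open>a = z\<close> \<open>b = z\<close> by simp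
qed

theorem lemma4p12:
  fixes Sig :: "(real^'n) set set"
    and Lc :: "'c set" and facL :: "'c \<Rightarrow> 'c \<Rightarrow> bool" and mu :: "'c \<Rightarrow> nat"
    and pr :: "'c \<Rightarrow> (real^'n) set" and phi :: "'c \<Rightarrow> real^'n \<Rightarrow> real" and r :: nat
    and tau sigma1 sigma2 :: "(real^'n) set" and lift :: "nat \<Rightarrow> 'c"
    and ncoef :: "'c \<Rightarrow> nat \<Rightarrow> nat \<Rightarrow> complex"
  assumes "complete_fan Sig"
    and "trop_lag_multisection Sig Lc facL mu pr phi r"
    and "codim1_separable Sig Lc pr phi"
    and "ramification_in_codim2 Sig Lc facL mu pr"
    and "tau \<in> cones_of_dim Sig (CARD('n) - 1)"
    and "sigma1 \<in> cones_of_dim Sig CARD('n)" and "sigma2 \<in> cones_of_dim Sig CARD('n)"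
    and "tau = sigma1 \<inter> sigma2"
    and "lifts_listing Lc mu pr r sigma1 lift"
  shows "(\<forall>w\<in>Lc. nilpotent_mat (N_endo facL pr phi r tau lift (ncoef w) w))
    \<and> (\<forall>w1\<in>Lc. \<forall>w2\<in>Lc. w1 \<noteq> w2 \<and> pr w1 = pr w2 \<longrightarrow>
         N_endo facL pr phi r tau lift (ncoef w1) w1 * N_endo facL pr phi r tau lift (ncoef w2) w2
           = 0\<^sub>m r r)
    \<and> (\<forall>w1\<in>Lc. \<forall>w2\<in>Lc. pr w1 = pr w2 \<longrightarrow>
         N_endo facL pr phi r tau lift (ncoef w1) w1 * N_endo facL pr phi r tau lift (ncoef w2) w2
         - N_endo facL pr phi r tau lift (ncoef w2) w2 * N_endo facL pr phi r tau lift (ncoef w1) w1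
           = 0\<^sub>m r r)"
  proof -
  have T: "(\<forall>c\<in>Lc. bij_betw pr {d\<in>Lc. facL d c} {F\<in>Sig. F face_of pr c})"
       "(\<forall>c\<in>Lc. \<exists>m. \<forall>x\<in>pr c. phi c x = ofv m \<bullet> x)"
       "(\<forall>c\<in>Lc. \<forall>d\<in>Lc. facL d c \<longrightarrow> (\<forall>x\<in>pr d. phi d x = phi c x))"
    using assms(2) unfolding trop_lag_multisection_def by blast+
  have fanS: "fan Sig" using assms(1) unfolding complete_fan_def by blast
  have s1S: "sigma1 \<in> Sig" and s2S: "sigma2 \<in> Sig" and tS: "tau \<in> Sig"
    using assms(5,6,7) unfolding cones_of_dim_def by auto
  have dims1: "aff_dim sigma1 = int CARD('n)" using assms(6) unfolding cones_of_dim_def by auto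
  have dimt: "aff_dim tau = int (CARD('n) - 1)" using assms(5) unfolding cones_of_dim_def by auto
  have cpos: "0 < CARD('n)" by (rule zero_less_card_finite)
  have "\<forall>C\<in>Sig. \<forall>D\<in>Sig. (C \<inter> D) face_of C \<and> (C \<inter> D) face_of D"
    using fanS unfolding fan_def by blast
  then have tface: "tau face_of sigma1" using s1S s2S assms(8) by blast
  have tsub: "tau \<subseteq> sigma1" using tface face_of_imp_subset by blast
  have liftL: "\<And>a. a < r \<Longrightarrow> lift a \<in> Lc \<and> pr (lift a) = sigma1"
    using assms(9) unfolding lifts_listing_def by auto
  have slopeP: "\<And>c. c \<in> Lc \<Longrightarrow> \<forall>x\<in>pr c. phi c x = ofv (slope pr phi c) \<bullet> x"
  proof -
    fix c assume "c \<in> Lc"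
    then have "\<exists>m. \<forall>x\<in>pr c. phi c x = ofv m \<bullet> x" using T by auto
    then show "\<forall>x\<in>pr c. phi c x = ofv (slope pr phi c) \<bullet> x"
      unfolding slope_def by (rule someI_ex)
  qed
  define m where "m a = slope pr phi (lift a)" for a
  define D where "D = dual_lattice_pts tau"
  have lift_inj: "a = b" if ab: "a < r" "b < r" "lift a = lift b" for a b
  proof -
    have la: "lift a \<in> Lc" "pr (lift a) = sigma1" using liftL ab by auto
    have "int CARD('n) - 1 \<le> aff_dim (pr (lift a))" using la dims1 by simp
    moreover have R4: "\<forall>c\<in>Lc. int CARD('n) - 1 \<le> aff_dim (pr c) \<longrightarrow> unramified_at Sig Lc facL mu pr c"
      using assms(4) unfolding ramification_in_codim2_def .
    ultimately have "unramified_at Sig Lc facL mu pr (lift a)" using la(1) by simp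
    then have mu1: "mu (lift a) = 1" unfolding unramified_at_def by (rule conjunct1)
    have L9: "\<forall>c\<in>Lc. pr c = sigma1 \<longrightarrow> card {a. a < r \<and> lift a = c} = mu c"
      using assms(9) unfolding lifts_listing_def by (rule conjunct2)
    have "card {a'. a' < r \<and> lift a' = lift a} = 1"
      using L9 la mu1 by simp
    then show ?thesis using card1_eq ab by blast
  qed
  have below: "\<exists>d\<in>Lc. facL d (lift a) \<and> pr d = tau" if a: "a < r" for a
  proof -
    have la: "lift a \<in> Lc" "pr (lift a) = sigma1" using liftL a by auto
    have "bij_betw pr {d\<in>Lc. facL d (lift a)} {F\<in>Sig. F face_of pr (lift a)}"
      using T(1) la(1) by blast
    then have "pr ` {d\<in>Lc. facL d (lift a)} = {F\<in>Sig. F face_of sigma1}"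
      using la(2) by (simp add: bij_betw_def)
    moreover have "tau \<in> {F\<in>Sig. F face_of sigma1}" using tS tface by blast
    ultimately have "tau \<in> pr ` {d\<in>Lc. facL d (lift a)}" by simp
    then obtain d where "d \<in> {d\<in>Lc. facL d (lift a)}" "tau = pr d" by (rule imageE)
    then show ?thesis by blast
  qed
  have phi_below: "phi d x = ofv (m a) \<bullet> x"
    if a: "a < r" and d: "d \<in> Lc" "facL d (lift a)" "pr d = tau" and x: "x \<in> tau" for a d x
  proof -
    have la: "lift a \<in> Lc" "pr (lift a) = sigma1" using liftL a by auto
    have xd: "x \<in> pr d" using x d(3) by simp
    have xs: "x \<in> pr (lift a)" using la(2) x tsub by auto
    have "phi d x = phi (lift a) x" using T(3) la(1) d(1,2) xd by blast
    also have "\<dots> = ofv (m a) \<bullet> x" using slopeP[OF la(1)] xs unfolding m_def by blast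
    finally show ?thesis .
  qed
  have anti: "a = b" if ab: "a < r" "b < r" "m a - m b \<in> D" "m b - m a \<in> D" for a b
  proof -
    obtain ca where ca: "ca \<in> Lc" "facL ca (lift a)" "pr ca = tau" using below ab by blast
    obtain cb where cb: "cb \<in> Lc" "facL cb (lift b)" "pr cb = tau" using below ab by blast
    have eq: "phi ca x = phi cb x" if x: "x \<in> tau" for x
    proof -
      have "0 \<le> ofv (m a - m b) \<bullet> x" "0 \<le> ofv (m b - m a) \<bullet> x"
        using ab x unfolding D_def dual_lattice_pts_def by auto
      then have "ofv (m a) \<bullet> x = ofv (m b) \<bullet> x" by (simp add: ofv_diff inner_diff_left)
      then show ?thesis using phi_below[OF ab(1) ca x] phi_below[OF ab(2) cb x] by simp
    qed
    have "ca = cb"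
    proof (rule ccontr)
      assume "ca \<noteq> cb"
      then have "\<exists>x\<in>tau. phi ca x \<noteq> phi cb x"
        using assms(3,5) ca cb unfolding codim1_separable_def by blast
      then show False using eq by auto
    qed
    have "int CARD('n) - 1 \<le> aff_dim (pr ca)" using ca dimt cpos by simp
    then have un: "unramified_at Sig Lc facL mu pr ca" using assms(4) ca
      unfolding ramification_in_codim2_def by auto
    then have "\<exists>!d. d \<in> Lc \<and> facL ca d \<and> pr d = sigma1"
      using s1S tface ca unfolding unramified_at_def by auto
    moreover have "lift a \<in> Lc \<and> facL ca (lift a) \<and> pr (lift a) = sigma1" using liftL ab ca by auto
    moreover have "lift b \<in> Lc \<and> facL ca (lift b) \<and> pr (lift b) = sigma1"
      using liftL ab cb \<open>ca = cb\<close> by auto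
    ultimately have "lift a = lift b" by blast
    then show ?thesis using lift_inj ab by auto
  qed
  have Dtrans: "m a - m c \<in> D" if "m a - m b \<in> D" "m b - m c \<in> D" for a b c
    unfolding D_def dual_lattice_pts_def
  proof (intro CollectI ballI)
    fix v assume v: "v \<in> tau"
    have "0 \<le> ofv (m a - m b) \<bullet> v" "0 \<le> ofv (m b - m c) \<bullet> v"
      using that v unfolding D_def dual_lattice_pts_def by auto
    then show "0 \<le> ofv (m a - m c) \<bullet> v" by (simp add: ofv_diff inner_diff_left)
  qed
  define R where "R a b \<longleftrightarrow> a < r \<and> b < r \<and> a \<noteq> b \<and> m a - m b \<in> D" for a b
  have Rtrans: "R a c" if "R a b" "R b c" for a b c
    using that anti Dtrans unfolding R_def by metis
  have Rirr: "\<not> R a a" for a unfolding R_def by auto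
  define N where "N w = N_endo facL pr phi r tau lift (ncoef w) w" for w
  have Ncar: "N w \<in> carrier_mat r r" for w unfolding N_def N_endo_def by auto
  have Nent: "facL w (lift i) \<and> facL w (lift j) \<and> R i j"
    if "i < r" "j < r" "N w $$ (i,j) \<noteq> 0" for w i j
    using that unfolding N_def N_endo_def R_def m_def D_def by (auto split: if_splits)
  define h where "h a = card {b. b < r \<and> R a b}" for a
  have hbnd: "h i < r" if "i < r" for i
  proof -
    have s1: "{b. b < r \<and> R i b} \<subseteq> {0..<r}" by auto
    have s2: "i \<in> {0..<r}" "i \<notin> {b. b < r \<and> R i b}" using that Rirr by auto
    have "{b. b < r \<and> R i b} \<subset> {0..<r}" using s1 s2 by blast
    then have "card {b. b < r \<and> R i b} < card {0..<r}" by (rule psubset_card_mono[rotated]) simp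
    then show ?thesis unfolding h_def by simp
  qed
  have hdec: "h j < h i" if ij: "R i j" for i j
  proof -
    have s1: "{b. b < r \<and> R j b} \<subseteq> {b. b < r \<and> R i b}"
    proof
      fix c assume "c \<in> {b. b < r \<and> R j b}"
      then have "c < r" "R j c" by auto
      then show "c \<in> {b. b < r \<and> R i b}" using Rtrans[OF ij] by blast
    qed
    have s2: "j \<in> {b. b < r \<and> R i b}" "j \<notin> {b. b < r \<and> R j b}"
      using ij Rirr unfolding R_def by auto
    have "{b. b < r \<and> R j b} \<subset> {b. b < r \<and> R i b}" using s1 s2 by blast
    then have "card {b. b < r \<and> R j b} < card {b. b < r \<and> R i b}"
      by (rule psubset_card_mono[rotated]) simp
    then show ?thesis unfolding h_def by simp
  qed
  have P1: "\<forall>w\<in>Lc. nilpotent_mat (N w)"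
  proof
    fix w assume "w \<in> Lc"
    show "nilpotent_mat (N w)"
      by (rule nilp_rank[OF Ncar, where h=h]) (use Nent hdec hbnd in blast)+
  qed
  have P2: "N w1 * N w2 = 0\<^sub>m r r" if w: "w1 \<in> Lc" "w2 \<in> Lc" "w1 \<noteq> w2" "pr w1 = pr w2" for w1 w2
  proof (rule eq_matI)
    fix i j assume "i < dim_row (0\<^sub>m r r :: ((int^'n) \<Rightarrow>\<^sub>0 complex) mat)"
      "j < dim_col (0\<^sub>m r r :: ((int^'n) \<Rightarrow>\<^sub>0 complex) mat)"
    then have ij: "i < r" "j < r" by auto
    show "(N w1 * N w2) $$ (i,j) = 0\<^sub>m r r $$ (i,j)"
    proof (rule ccontr)
      assume "(N w1 * N w2) $$ (i,j) \<noteq> 0\<^sub>m r r $$ (i,j)"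
      then have "(N w1 * N w2) $$ (i,j) \<noteq> 0" using ij by simp
      then obtain l where l: "l < r" "N w1 $$ (i,l) \<noteq> 0" "N w2 $$ (l,j) \<noteq> 0"
        using mult_entry_nz[OF Ncar Ncar ij] by blast
      have f: "facL w1 (lift l)" "facL w2 (lift l)" using Nent l ij by auto
      have "lift l \<in> Lc" using liftL l by auto
      then have "inj_on pr {d\<in>Lc. facL d (lift l)}" using T by (auto simp: bij_betw_def)
      then have "w1 = w2" using f w unfolding inj_on_def by auto
      then show False using w by auto
    qed
  qed (use Ncar in auto)
  have P3: "N w1 * N w2 - N w2 * N w1 = 0\<^sub>m r r" if w: "w1 \<in> Lc" "w2 \<in> Lc" "pr w1 = pr w2" for w1 w2
  proof (cases "w1 = w2")
    case True
    have "N w1 * N w2 \<in> carrier_mat r r" using Ncar by (rule mult_carrier_mat[OF Ncar])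
    then show ?thesis using True by (simp add: minus_r_inv_mat)
  next
    case False
    then show ?thesis using P2 w by auto
  qed
  show ?thesis using P1 P2 P3 unfolding N_def by blast
qed

end
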